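(* Let $\theta\in(0,\pi)$. For any $r_1,r_2\in(0,\frac{\pi}{2})$ there exists, up to isometry, a unique spherical bigon of angle $\theta$ with sides labeled $1,2$ such that, for $i=1,2$, the disk $D_i\subset\mathbb{S}^2$ whose boundary contains side $i$ has radius $r_i$.
   Context: A spherical bigon is the intersection $D_1\cap D_2$ of two open round disks in the unit sphere $\mathbb{S}^2$ of radii less than $\frac{\pi}{2}$, neither containing the other; its two sides are the boundary arcs lying on $\partial D_1$ and $\partial D_2$, and its angle is the interior angle formed by the two sides at the corners. *)

theory Defs
  imports "HOL-Analysis.Analysis"
begin

definition S2 :: "(real^3) set" where
  "S2 = sphere 0 1"

definition sdist :: "real^3 \<Rightarrow> real^3 \<Rightarrow> real" where
  "sdist x y = arccos (x \<bullet> y)"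

definition sdisk :: "real^3 \<Rightarrow> real \<Rightarrow> (real^3) set" where
  "sdisk c r = {x \<in> S2. sdist c x < r}"

definition is_sdisk :: "(real^3) set \<Rightarrow> real \<Rightarrow> bool" where
  "is_sdisk D r \<longleftrightarrow> (\<exists>c\<in>S2. D = sdisk c r)"

definition is_bigon :: "(real^3) set \<Rightarrow> (real^3) set \<Rightarrow> bool" where
  "is_bigon D1 D2 \<longleftrightarrow>
     (\<exists>r1. 0 < r1 \<and> r1 < pi/2 \<and> is_sdisk D1 r1) \<and>
     (\<exists>r2. 0 < r2 \<and> r2 < pi/2 \<and> is_sdisk D2 r2) \<and>
     \<not> D1 \<subseteq> D2 \<and> \<not> D2 \<subseteq> D1 \<and> D1 \<inter> D2 \<noteq> {}"

text \<open>Side i of the bigon: the part of the boundary of the bigon lying on the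
  boundary circle of D_i.  (Disks are open in the closed set S2, so boundaries
  are closure minus the set.)\<close>

definition bigon_side :: "(real^3) set \<Rightarrow> (real^3) set \<Rightarrow> (real^3) set" where
  "bigon_side Di Dj = (closure (Di \<inter> Dj) - (Di \<inter> Dj)) \<inter> (closure Di - Di)"

definition bigon_corners :: "(real^3) set \<Rightarrow> (real^3) set \<Rightarrow> (real^3) set" where
  "bigon_corners D1 D2 = bigon_side D1 D2 \<inter> bigon_side D2 D1"

definition one_sided_tangent :: "(real^3) set \<Rightarrow> real^3 \<Rightarrow> real^3 \<Rightarrow> bool" where
  "one_sided_tangent S p t \<longleftrightarrow>
     p islimpt S \<and> ((\<lambda>q. (q - p) /\<^sub>R norm (q - p)) \<longlongrightarrow> t) (at p within S)"

definition bigon_angle :: "(real^3) set \<Rightarrow> (real^3) set \<Rightarrow> real \<Rightarrow> bool" where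
  "bigon_angle D1 D2 \<theta> \<longleftrightarrow>
     bigon_corners D1 D2 \<noteq> {} \<and>
     (\<forall>p\<in>bigon_corners D1 D2. \<exists>t1 t2.
        one_sided_tangent (bigon_side D1 D2) p t1 \<and>
        one_sided_tangent (bigon_side D2 D1) p t2 \<and>
        \<theta> = arccos (t1 \<bullet> t2))"

definition sphere_isometry :: "(real^3 \<Rightarrow> real^3) \<Rightarrow> bool" where
  "sphere_isometry f \<longleftrightarrow> f ` S2 = S2 \<and>
     (\<forall>x\<in>S2. \<forall>y\<in>S2. sdist (f x) (f y) = sdist x y)"

end

theory Submission
  imports Defs "HOL-Analysis.Cross3"
begin

unbundle cross3_syntax



lemma cross_triple_expand: "(a::real^3) \<times> (b \<times> c) = (a \<bullet> c) *\<^sub>R b - (a \<bullet> b) *\<^sub>R c"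
  by (simp add: cross3_simps) (auto simp: forall_3 algebra_simps)

lemma cross_dot_cross: "((a::real^3) \<times> b) \<bullet> (c \<times> d) = (a \<bullet> c) * (b \<bullet> d) - (a \<bullet> d) * (b \<bullet> c)"
  by (simp add: cross3_simps)

lemma triple_gram: "((a::real^3) \<bullet> (b \<times> c))^2 =
   (a\<bullet>a)*((b\<bullet>b)*(c\<bullet>c) - (b\<bullet>c)^2) - (a\<bullet>b)*((a\<bullet>b)*(c\<bullet>c) - (b\<bullet>c)*(a\<bullet>c))
   + (a\<bullet>c)*((a\<bullet>b)*(b\<bullet>c) - (b\<bullet>b)*(a\<bullet>c))"
  by (simp add: cross3_simps power2_eq_square)

lemma cross_cross_same: "((a::real^3) \<times> b) \<times> (a \<times> c) = (a \<bullet> (b \<times> c)) *\<^sub>R a"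
  by (simp add: cross3_simps) (auto simp: forall_3 algebra_simps)

lemma triple_swap: "(c::real^3) \<bullet> (p \<times> a) = - (a \<bullet> (p \<times> c))"
  by (simp add: cross3_simps)

lemma triple_cyc: "(p::real^3) \<bullet> (a \<times> c) = - (a \<bullet> (p \<times> c))"
  by (simp add: cross3_simps)


lemma par_cross:
  fixes t p a :: "real^3"
  assumes "t \<bullet> a = 0" "t \<bullet> p = 0"
  shows "((p \<times> a) \<bullet> (p \<times> a)) *\<^sub>R t = ((p \<times> a) \<bullet> t) *\<^sub>R (p \<times> a)"
proof -
  have "t \<times> (p \<times> a) = 0" using assms by (simp add: cross_triple_expand inner_commute)
  have "(p \<times> a) \<times> (t \<times> (p \<times> a)) = ((p \<times> a) \<bullet> (p \<times> a)) *\<^sub>R t - ((p \<times> a) \<bullet> t) *\<^sub>R (p \<times> a)"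
    by (rule cross_triple_expand)
  thus ?thesis using \<open>t \<times> (p \<times> a) = 0\<close> by simp
qed

lemma angle_alg:
  fixes c1 c2 p t1 t2 :: "real^3"
  assumes u: "c1 \<bullet> c1 = 1" "c2 \<bullet> c2 = 1" "p \<bullet> p = 1" "t1 \<bullet> t1 = 1" "t2 \<bullet> t2 = 1"
    and cp: "c1 \<bullet> p = a1" "c2 \<bullet> p = a2"
    and o: "t1 \<bullet> c1 = 0" "t1 \<bullet> p = 0" "t2 \<bullet> c2 = 0" "t2 \<bullet> p = 0"
    and sg: "c2 \<bullet> t1 \<ge> 0" "c1 \<bullet> t2 \<ge> 0"
    and s: "s1 > 0" "s2 > 0" "s1^2 = 1 - a1^2" "s2^2 = 1 - a2^2"
  shows "(t1 \<bullet> t2)^2 = 1 \<or> s1 * s2 * (t1 \<bullet> t2) = - (c1 \<bullet> c2 - a1 * a2)"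
proof -
  define x1 where "x1 = p \<times> c1"
  define x2 where "x2 = p \<times> c2"
  define D where "D = c1 \<bullet> (p \<times> c2)"
  define A where "A = x1 \<bullet> t1"
  define B where "B = x2 \<bullet> t2"
  have n1: "x1 \<bullet> x1 = s1^2" unfolding x1_def using u cp s
    by (simp add: cross_dot_cross inner_commute power2_eq_square)
  have n2: "x2 \<bullet> x2 = s2^2" unfolding x2_def using u cp s
    by (simp add: cross_dot_cross inner_commute power2_eq_square)
  have x12: "x1 \<bullet> x2 = c1 \<bullet> c2 - a1 * a2" unfolding x1_def x2_def using u cp
    by (simp add: cross_dot_cross inner_commute)
  have e1: "s1^2 *\<^sub>R t1 = A *\<^sub>R x1" using par_cross[OF o(1,2)] n1 unfolding A_def x1_def by (simp add: inner_commute)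
  have e2: "s2^2 *\<^sub>R t2 = B *\<^sub>R x2" using par_cross[OF o(3,4)] n2 unfolding B_def x2_def by (simp add: inner_commute)
  have A2: "A^2 = s1^2"
  proof -
    have "t1 \<bullet> (s1^2 *\<^sub>R t1) = t1 \<bullet> (A *\<^sub>R x1)" using e1 by simp
    hence "s1^2 = A * A" using u unfolding A_def by (simp add: inner_commute)
    thus ?thesis by (simp add: power2_eq_square)
  qed
  have B2: "B^2 = s2^2"
  proof -
    have "t2 \<bullet> (s2^2 *\<^sub>R t2) = t2 \<bullet> (B *\<^sub>R x2)" using e2 by simp
    hence "s2^2 = B * B" using u unfolding B_def by (simp add: inner_commute)
    thus ?thesis by (simp add: power2_eq_square)
  qed
  have main: "s1^2 * s2^2 * (t1 \<bullet> t2) = A * B * (c1 \<bullet> c2 - a1 * a2)"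
  proof -
    have "(s1^2 *\<^sub>R t1) \<bullet> (s2^2 *\<^sub>R t2) = (A *\<^sub>R x1) \<bullet> (B *\<^sub>R x2)" using e1 e2 by simp
    thus ?thesis using x12 by (simp add: algebra_simps)
  qed
  have sg1: "s1^2 * (c2 \<bullet> t1) = - A * D"
  proof -
    have "c2 \<bullet> (s1^2 *\<^sub>R t1) = c2 \<bullet> (A *\<^sub>R x1)" using e1 by simp
    moreover have "c2 \<bullet> x1 = - D" unfolding x1_def D_def by (rule triple_swap)
    ultimately show ?thesis by simp
  qed
  have sg2: "s2^2 * (c1 \<bullet> t2) = B * D"
  proof -
    have "c1 \<bullet> (s2^2 *\<^sub>R t2) = c1 \<bullet> (B *\<^sub>R x2)" using e2 by simp
    thus ?thesis unfolding x2_def D_def by simp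
  qed
  show ?thesis
  proof (cases "D = 0")
    case True
    have "x1 \<times> x2 = (p \<bullet> (c1 \<times> c2)) *\<^sub>R p" unfolding x1_def x2_def by (rule cross_cross_same)
    also have "p \<bullet> (c1 \<times> c2) = 0" using True triple_cyc[of p c1 c2] unfolding D_def by simp
    finally have "x1 \<times> x2 = 0" by simp
    hence "(x1 \<bullet> x2)^2 = (x1 \<bullet> x1) * (x2 \<bullet> x2)"
      using norm_cross_dot[of x1 x2] by (simp add: power_mult_distrib power2_norm_eq_inner)
    hence xx: "(x1 \<bullet> x2)^2 = s1^2 * s2^2" using n1 n2 by simp
    have "(s1^2 * s2^2 * (t1 \<bullet> t2))^2 = (s1^2 * s2^2)^2"
    proof -
      have "(s1^2 * s2^2 * (t1 \<bullet> t2))^2 = A^2 * B^2 * (c1 \<bullet> c2 - a1 * a2)^2"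
        using main by (simp add: power_mult_distrib)
      also have "\<dots> = (s1^2 * s2^2)^2" by (simp only: x12[symmetric]) (simp only: xx A2 B2 power2_eq_square[of "s1^2 * s2^2"])
      finally show ?thesis .
    qed
    hence "(s1^2 * s2^2)^2 * ((t1 \<bullet> t2)^2 - 1) = 0" by (simp add: algebra_simps power_mult_distrib)
    moreover have "(s1^2 * s2^2)^2 \<noteq> 0" using s(1,2) by simp
    ultimately have "(t1 \<bullet> t2)^2 - 1 = 0" by (metis mult_eq_0_iff)
    thus ?thesis by simp
  next
    case False
    have "A * D \<le> 0" using sg1 sg(1) s by (metis mult_nonneg_nonneg neg_0_le_iff_le zero_le_power2 mult_minus_left)
    moreover have "B * D \<ge> 0" using sg2 sg(2) s by (metis mult_nonneg_nonneg zero_le_power2)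
    ultimately have "(A * B) * (D * D) \<le> 0"
      by (metis mult_nonpos_nonneg mult.assoc mult.left_commute)
    hence AB: "A * B \<le> 0" using False
      by (metis mult_le_0_iff not_square_less_zero order_le_less zero_less_mult_iff)
    have "(A * B)^2 = (s1 * s2)^2" using A2 B2 by (simp add: power_mult_distrib)
    hence "A * B = s1 * s2 \<or> A * B = - (s1 * s2)" by (simp add: power2_eq_iff)
    hence "A * B = - (s1 * s2)" using AB s by (metis mult_pos_pos neg_0_less_iff_less not_le)
    hence "(s1 * s2) * (s1 * s2 * (t1 \<bullet> t2)) = (s1 * s2) * (- (c1 \<bullet> c2 - a1 * a2))"
      using main by (simp add: power2_eq_square algebra_simps)
    thus ?thesis using s by simp
  qed
qed


lemma tangent_props:
  fixes S :: "(real^3) set" and a b p t :: "real^3"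
  assumes S: "S \<subseteq> {x. x \<bullet> x = 1 \<and> a \<bullet> x = \<alpha> \<and> b \<bullet> x \<ge> \<beta>}"
    and p: "p \<bullet> p = 1" "a \<bullet> p = \<alpha>" "b \<bullet> p = \<beta>"
    and T: "one_sided_tangent S p t"
  shows "t \<bullet> t = 1 \<and> t \<bullet> a = 0 \<and> t \<bullet> p = 0 \<and> b \<bullet> t \<ge> 0"
proof -
  define w where "w q = (q - p) /\<^sub>R norm (q - p)" for q
  have lim: "(w \<longlongrightarrow> t) (at p within S)" and lp: "p islimpt S"
    using T unfolding one_sided_tangent_def w_def by auto
  have F: "at p within S \<noteq> bot" using lp trivial_limit_within by blast
  have ev: "eventually (\<lambda>q. q \<in> S \<and> q \<noteq> p) (at p within S)"
    by (auto simp: eventually_at_filter)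
  have qS: "q \<bullet> q = 1" "a \<bullet> q = \<alpha>" "b \<bullet> q \<ge> \<beta>" if "q \<in> S" for q using S that by auto
  have n: "norm (q - p) > 0" if "q \<noteq> p" for q using that by simp
  have "norm t = 1"
  proof -
    have "eventually (\<lambda>q. w q \<in> sphere 0 1) (at p within S)"
      using ev by eventually_elim (auto simp: w_def)
    from Lim_in_closed_set[OF closed_sphere this F lim] show ?thesis by simp
  qed
  hence t1: "t \<bullet> t = 1" by (metis norm_eq_1)
  have "t \<in> {y. inner a y = 0}"
  proof (rule Lim_in_closed_set[OF closed_hyperplane _ F lim])
    show "eventually (\<lambda>q. w q \<in> {y. a \<bullet> y = 0}) (at p within S)"
      using ev by eventually_elim (auto simp: w_def qS p inner_diff_right)
  qed
  hence t2: "t \<bullet> a = 0" by (simp add: inner_commute)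
  have "t \<in> {y. inner b y \<ge> 0}"
  proof (rule Lim_in_closed_set[OF closed_halfspace_ge _ F lim])
    show "eventually (\<lambda>q. w q \<in> {y. b \<bullet> y \<ge> 0}) (at p within S)"
      using ev by eventually_elim (auto simp: w_def qS p inner_diff_right)
  qed
  hence t4: "b \<bullet> t \<ge> 0" by simp
  have l1: "((\<lambda>q. p \<bullet> w q) \<longlongrightarrow> p \<bullet> t) (at p within S)"
    by (intro tendsto_intros lim)
  have l2: "((\<lambda>q. - norm (q - p) / (2::real)) \<longlongrightarrow> - norm (p - p) / 2) (at p within S)"
    by (intro tendsto_intros) auto
  have "eventually (\<lambda>q. - norm (q - p) / 2 = p \<bullet> w q) (at p within S)"
    using ev
  proof eventually_elim
    case (elim q)
    have "(norm (q - p))^2 = 2 - 2 * (p \<bullet> q)"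
      using qS(1)[OF conjunct1[OF elim]] p(1) by (simp add: power2_norm_eq_inner algebra_simps inner_commute)
    hence "p \<bullet> (q - p) = - ((norm (q - p))^2) / 2" using p(1) by (simp add: inner_diff_right)
    thus ?case using n[of q] elim by (simp add: w_def power2_eq_square)
  qed
  from Lim_transform_eventually[OF l2 this] have "((\<lambda>q. p \<bullet> w q) \<longlongrightarrow> 0) (at p within S)" by simp
  from tendsto_unique[OF F l1 this] have "t \<bullet> p = 0" by (simp add: inner_commute)
  with t1 t2 t4 show ?thesis by simp
qed


lemma S2_iff: "x \<in> S2 \<longleftrightarrow> x \<bullet> x = 1"
  by (simp add: S2_def norm_eq_1)

lemma inner_S2_bound: "x \<in> S2 \<Longrightarrow> y \<in> S2 \<Longrightarrow> \<bar>x \<bullet> y\<bar> \<le> 1"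
  using Cauchy_Schwarz_ineq2[of x y] by (simp add: S2_def)

lemma sdisk_eq:
  assumes "c \<in> S2" "0 < r" "r < pi"
  shows "sdisk c r = {x \<in> S2. c \<bullet> x > cos r}"
proof -
  have "arccos (c \<bullet> x) < r \<longleftrightarrow> cos r < c \<bullet> x" if "x \<in> S2" for x
  proof -
    have "arccos (c \<bullet> x) < arccos (cos r) \<longleftrightarrow> cos r < c \<bullet> x"
      by (rule arccos_less_mono) (use inner_S2_bound[OF assms(1) that] in auto)
    thus ?thesis using assms by (simp add: arccos_cos)
  qed
  thus ?thesis unfolding sdisk_def sdist_def by auto
qed

lemma closure_sdisk_sub:
  assumes "c \<in> S2" "0 < r" "r < pi"
  shows "closure (sdisk c r) \<subseteq> S2 \<inter> {x. c \<bullet> x \<ge> cos r}"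
proof (rule closure_minimal)
  show "sdisk c r \<subseteq> S2 \<inter> {x. c \<bullet> x \<ge> cos r}" using sdisk_eq[OF assms] by auto
  show "closed (S2 \<inter> {x. c \<bullet> x \<ge> cos r})"
    by (intro closed_Int closed_halfspace_ge) (simp add: S2_def)
qed

lemma side_sub:
  assumes "c1 \<in> S2" "0 < r1" "r1 < pi" "c2 \<in> S2" "0 < r2" "r2 < pi"
  shows "bigon_side (sdisk c1 r1) (sdisk c2 r2) \<subseteq> {x. x \<bullet> x = 1 \<and> c1 \<bullet> x = cos r1 \<and> c2 \<bullet> x \<ge> cos r2}"
proof
  fix x assume x: "x \<in> bigon_side (sdisk c1 r1) (sdisk c2 r2)"
  have "closure (sdisk c1 r1 \<inter> sdisk c2 r2) \<subseteq> closure (sdisk c2 r2)" by (intro closure_mono) auto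
  with x closure_sdisk_sub[OF assms(4-6)] have "c2 \<bullet> x \<ge> cos r2" unfolding bigon_side_def by blast
  moreover from x closure_sdisk_sub[OF assms(1-3)] have "x \<in> S2" "c1 \<bullet> x \<ge> cos r1" "x \<notin> sdisk c1 r1"
    unfolding bigon_side_def by blast+
  moreover have "\<not> c1 \<bullet> x > cos r1" using calculation(2,4) sdisk_eq[OF assms(1-3)] by auto
  ultimately show "x \<in> {x. x \<bullet> x = 1 \<and> c1 \<bullet> x = cos r1 \<and> c2 \<bullet> x \<ge> cos r2}"
    by (auto simp: S2_iff)
qed

lemma corner_props:
  assumes "c1 \<in> S2" "0 < r1" "r1 < pi" "c2 \<in> S2" "0 < r2" "r2 < pi"
    and "p \<in> bigon_corners (sdisk c1 r1) (sdisk c2 r2)"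
  shows "p \<bullet> p = 1" "c1 \<bullet> p = cos r1" "c2 \<bullet> p = cos r2"
  using side_sub[OF assms(1-6)] side_sub[OF assms(4-6) assms(1-3)] assms(7)
  unfolding bigon_corners_def by auto

lemma angle_det:
  assumes c: "c1 \<in> S2" "c2 \<in> S2" and r: "0 < r1" "r1 < pi/2" "0 < r2" "r2 < pi/2"
    and th: "0 < \<theta>" "\<theta> < pi"
    and A: "bigon_angle (sdisk c1 r1) (sdisk c2 r2) \<theta>"
  shows "c1 \<bullet> c2 = cos r1 * cos r2 - sin r1 * sin r2 * cos \<theta>"
proof -
  have r': "r1 < pi" "r2 < pi" using r by auto
  obtain p where p: "p \<in> bigon_corners (sdisk c1 r1) (sdisk c2 r2)" using A unfolding bigon_angle_def by auto
  then obtain t1 t2 where T1: "one_sided_tangent (bigon_side (sdisk c1 r1) (sdisk c2 r2)) p t1"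
     and T2: "one_sided_tangent (bigon_side (sdisk c2 r2) (sdisk c1 r1)) p t2"
     and th_eq: "\<theta> = arccos (t1 \<bullet> t2)"
    using A unfolding bigon_angle_def by blast
  note cp = corner_props[OF c(1) r(1) r'(1) c(2) r(3) r'(2) p]
  have P1: "t1 \<bullet> t1 = 1 \<and> t1 \<bullet> c1 = 0 \<and> t1 \<bullet> p = 0 \<and> c2 \<bullet> t1 \<ge> 0"
    by (rule tangent_props[OF side_sub[OF c(1) r(1) r'(1) c(2) r(3) r'(2)] cp T1])
  have P2: "t2 \<bullet> t2 = 1 \<and> t2 \<bullet> c2 = 0 \<and> t2 \<bullet> p = 0 \<and> c1 \<bullet> t2 \<ge> 0"
    by (rule tangent_props[OF side_sub[OF c(2) r(3) r'(2) c(1) r(1) r'(1)] cp(1,3,2) T2])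
  have s: "sin r1 > 0" "sin r2 > 0" "(sin r1)^2 = 1 - (cos r1)^2" "(sin r2)^2 = 1 - (cos r2)^2"
    using r by (auto intro!: sin_gt_zero simp: sin_squared_eq)
  have alg: "(t1 \<bullet> t2)^2 = 1 \<or> sin r1 * sin r2 * (t1 \<bullet> t2) = - (c1 \<bullet> c2 - cos r1 * cos r2)"
    by (rule angle_alg[where p=p]) (use c P1 P2 cp s in \<open>auto simp: S2_iff\<close>)
  have bd: "\<bar>t1 \<bullet> t2\<bar> \<le> 1" using inner_S2_bound[of t1 t2] P1 P2 by (simp add: S2_iff)
  have "(t1 \<bullet> t2)^2 \<noteq> 1"
  proof
    assume "(t1 \<bullet> t2)^2 = 1"
    hence "t1 \<bullet> t2 = 1 \<or> t1 \<bullet> t2 = -1" by (simp add: power2_eq_1_iff)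
    thus False using th th_eq by auto
  qed
  with alg have e: "sin r1 * sin r2 * (t1 \<bullet> t2) = - (c1 \<bullet> c2 - cos r1 * cos r2)" by simp
  have "cos \<theta> = t1 \<bullet> t2" using th_eq bd by (simp add: cos_arccos_abs)
  with e show ?thesis by simp
qed


definition rfl :: "real^3 \<Rightarrow> real^3 \<Rightarrow> real^3" where
  "rfl w x = x - (2 * (x \<bullet> w) / (w \<bullet> w)) *\<^sub>R w"

lemma rfl_inner: "rfl w x \<bullet> rfl w y = x \<bullet> y"
proof (cases "w = 0")
  case True thus ?thesis by (simp add: rfl_def)
next
  case False
  hence "w \<bullet> w \<noteq> 0" by simp
  thus ?thesis by (simp add: rfl_def inner_diff_left inner_diff_right inner_commute field_simps)
qed

lemma rfl_invol: "rfl w (rfl w x) = x"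
proof (cases "w = 0")
  case True thus ?thesis by (simp add: rfl_def)
next
  case False
  hence "w \<bullet> w \<noteq> 0" by simp
  thus ?thesis by (simp add: rfl_def inner_diff_left algebra_simps field_simps)
qed

lemma rfl_swap:
  assumes "u \<bullet> u = v \<bullet> v"
  shows "rfl (u - v) u = v"
proof (cases "u = v")
  case True thus ?thesis by (simp add: rfl_def)
next
  case False
  hence ne: "(u - v) \<bullet> (u - v) \<noteq> 0" by simp
  have eq: "2 * (u \<bullet> (u - v)) = (u - v) \<bullet> (u - v)"
    using assms by (simp add: inner_diff_left inner_diff_right inner_commute)
  have "2 * (u \<bullet> (u - v)) / ((u - v) \<bullet> (u - v)) = 1" using ne by (subst eq) simp
  moreover have "u \<bullet> (u - v) \<noteq> 0" using eq ne by auto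
  ultimately show ?thesis by (simp add: rfl_def)
qed

lemma rfl_fix: "e \<bullet> w = 0 \<Longrightarrow> rfl w e = e"
  by (simp add: rfl_def)

definition inner_pres :: "(real^3 \<Rightarrow> real^3) \<Rightarrow> bool" where
  "inner_pres f \<longleftrightarrow> f ` S2 = S2 \<and> (\<forall>x\<in>S2. \<forall>y\<in>S2. f x \<bullet> f y = x \<bullet> y)"

lemma inner_pres_rfl: "inner_pres (rfl w)"
proof -
  have "rfl w ` S2 \<subseteq> S2" by (auto simp: S2_iff rfl_inner)
  moreover have "S2 \<subseteq> rfl w ` S2"
  proof
    fix x assume "x \<in> S2"
    hence "rfl w x \<in> S2" by (simp add: S2_iff rfl_inner)
    thus "x \<in> rfl w ` S2" by (metis image_eqI rfl_invol)
  qed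
  ultimately show ?thesis unfolding inner_pres_def by (auto simp: rfl_inner)
qed

lemma inner_pres_comp: "inner_pres f \<Longrightarrow> inner_pres g \<Longrightarrow> inner_pres (g \<circ> f)"
proof -
  assume f: "inner_pres f" and g: "inner_pres g"
  have "(g \<circ> f) ` S2 = g ` (f ` S2)" by (simp add: image_comp)
  also have "\<dots> = S2" using f g unfolding inner_pres_def by simp
  finally have "(g \<circ> f) ` S2 = S2" .
  moreover have "f x \<in> S2" if "x \<in> S2" for x using f that unfolding inner_pres_def by blast
  ultimately show ?thesis using f g unfolding inner_pres_def by simp
qed

lemma inner_pres_iso: "inner_pres f \<Longrightarrow> sphere_isometry f"
  unfolding inner_pres_def sphere_isometry_def sdist_def by auto

lemma inner_pres_disk:
  assumes f: "inner_pres f" and c: "c \<in> S2"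
  shows "f ` sdisk c r = sdisk (f c) r"
proof
  show "f ` sdisk c r \<subseteq> sdisk (f c) r"
    using f c unfolding inner_pres_def sdisk_def sdist_def by auto
  show "sdisk (f c) r \<subseteq> f ` sdisk c r"
  proof
    fix x assume x: "x \<in> sdisk (f c) r"
    hence "x \<in> f ` S2" using f unfolding inner_pres_def sdisk_def by auto
    then obtain y where y: "y \<in> S2" "x = f y" by auto
    hence "y \<in> sdisk c r" using x f c unfolding inner_pres_def sdisk_def sdist_def by auto
    thus "x \<in> f ` sdisk c r" using y by auto
  qed
qed

lemma iso_exists:
  assumes "c1 \<in> S2" "c2 \<in> S2" "e1 \<in> S2" "e2 \<in> S2" "c1 \<bullet> c2 = e1 \<bullet> e2"
  shows "\<exists>f. inner_pres f \<and> f c1 = e1 \<and> f c2 = e2"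
proof -
  define f1 where "f1 = rfl (c1 - e1)"
  define u where "u = f1 c2"
  define f2 where "f2 = rfl (u - e2)"
  have f1c1: "f1 c1 = e1" unfolding f1_def by (rule rfl_swap) (use assms in \<open>simp add: S2_iff\<close>)
  have "u \<bullet> u = e2 \<bullet> e2" using assms unfolding u_def f1_def by (simp add: rfl_inner S2_iff)
  hence f2u: "f2 u = e2" unfolding f2_def by (rule rfl_swap)
  have "e1 \<bullet> u = c1 \<bullet> c2" unfolding u_def using f1c1 by (metis f1_def rfl_inner)
  hence "e1 \<bullet> (u - e2) = 0" using assms by (simp add: inner_diff_right)
  hence f2e1: "f2 e1 = e1" unfolding f2_def by (rule rfl_fix)
  show ?thesis
    by (rule exI[of _ "f2 \<circ> f1"]) (use f1c1 f2u f2e1 inner_pres_comp inner_pres_rfl in \<open>auto simp: f1_def f2_def u_def\<close>)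
qed


lemma approach:
  fixes x q c1 c2 :: "real^3"
  assumes x: "x \<in> S2" "c1 \<bullet> x \<ge> a1" "c2 \<bullet> x \<ge> a2"
    and q: "q \<in> S2" "c1 \<bullet> q > a1" "c2 \<bullet> q > a2"
    and a: "a1 > 0" "a2 > 0"
  shows "x \<in> closure {y \<in> S2. c1 \<bullet> y > a1 \<and> c2 \<bullet> y > a2}"
  unfolding closure_approachable
proof (intro allI impI)
  fix e :: real assume e: "e > 0"
  define t where "t = min (1/4) (e/8)"
  have t: "t > 0" "t \<le> 1/4" "t \<le> e/8" using e by (auto simp: t_def)
  define z where "z = (1 - t) *\<^sub>R x + t *\<^sub>R q"
  have nx: "norm x = 1" "norm q = 1" using x q by (auto simp: S2_def)
  have "norm z \<le> norm ((1 - t) *\<^sub>R x) + norm (t *\<^sub>R q)" unfolding z_def by (rule norm_triangle_ineq)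
  also have "\<dots> = 1" using t nx by simp
  finally have z1: "norm z \<le> 1" .
  have zx: "z - x = t *\<^sub>R (q - x)" unfolding z_def by (simp add: algebra_simps)
  have nqx: "norm (q - x) \<le> 2" using norm_triangle_ineq4[of q x] nx by simp
  have dzx: "norm (z - x) \<le> 2 * t" using zx nqx t by (simp add: mult.commute mult_left_mono)
  have "norm x - norm (z - x) \<le> norm z" using norm_triangle_ineq2[of x "x - z"] by (simp add: norm_minus_commute)
  hence z2: "norm z \<ge> 1 - 2 * t" using dzx nx by simp
  hence zpos: "norm z > 0" using t by linarith
  have cz: "c \<bullet> z > a" if "c \<bullet> x \<ge> a" "c \<bullet> q > a" for c a
  proof -
    have "c \<bullet> z = (1 - t) * (c \<bullet> x) + t * (c \<bullet> q)" by (simp add: z_def inner_add_right)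
    moreover have "(1 - t) * (c \<bullet> x) \<ge> (1 - t) * a" using that t by (intro mult_left_mono) auto
    moreover have "t * (c \<bullet> q) > t * a" using that t by simp
    ultimately show ?thesis by (simp add: algebra_simps)
  qed
  define y where "y = z /\<^sub>R norm z"
  have cy: "c \<bullet> y > a" if "c \<bullet> x \<ge> a" "c \<bullet> q > a" "a > 0" for c a
  proof -
    have h: "c \<bullet> z > a" using cz that by blast
    have "(c \<bullet> z) * norm z \<le> c \<bullet> z" using h that(3) z1 by (intro mult_left_le) auto
    hence "c \<bullet> z \<le> c \<bullet> z / norm z" using zpos by (simp add: le_divide_eq)
    thus ?thesis using h by (simp add: y_def divide_inverse_commute)
  qed
  have yS: "y \<in> S2" using zpos by (simp add: S2_def y_def)
  have "y - z = (1 / norm z - 1) *\<^sub>R z" by (simp add: y_def algebra_simps inverse_eq_divide)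
  hence "norm (y - z) = (1 / norm z - 1) * norm z" using zpos z1 by simp
  also have "\<dots> = 1 - norm z" using zpos by (simp add: field_simps)
  finally have dyz: "norm (y - z) \<le> 2 * t" using z2 by simp
  have "dist y x \<le> norm (y - z) + norm (z - x)"
    unfolding dist_norm using norm_triangle_ineq[of "y - z" "z - x"] by simp
  also have "\<dots> < e" using dyz dzx t e by simp
  finally have "dist y x < e" .
  thus "\<exists>y\<in>{y \<in> S2. c1 \<bullet> y > a1 \<and> c2 \<bullet> y > a2}. dist y x < e"
    using yS cy x q a by blast
qed

lemma side_eq:
  assumes c: "c1 \<in> S2" "c2 \<in> S2" and r: "0 < r1" "r1 < pi/2" "0 < r2" "r2 < pi/2"
    and q: "q \<in> sdisk c1 r1 \<inter> sdisk c2 r2"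
  shows "bigon_side (sdisk c1 r1) (sdisk c2 r2) = {x. x \<bullet> x = 1 \<and> c1 \<bullet> x = cos r1 \<and> c2 \<bullet> x \<ge> cos r2}"
proof
  have r': "r1 < pi" "r2 < pi" using r by auto
  show "bigon_side (sdisk c1 r1) (sdisk c2 r2) \<subseteq> {x. x \<bullet> x = 1 \<and> c1 \<bullet> x = cos r1 \<and> c2 \<bullet> x \<ge> cos r2}"
    using side_sub[OF c(1) r(1) r'(1) c(2) r(3) r'(2)] .
  show "{x. x \<bullet> x = 1 \<and> c1 \<bullet> x = cos r1 \<and> c2 \<bullet> x \<ge> cos r2} \<subseteq> bigon_side (sdisk c1 r1) (sdisk c2 r2)"
  proof
    fix x assume x: "x \<in> {x. x \<bullet> x = 1 \<and> c1 \<bullet> x = cos r1 \<and> c2 \<bullet> x \<ge> cos r2}"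
    have e1: "sdisk c1 r1 = {x \<in> S2. c1 \<bullet> x > cos r1}" using sdisk_eq c r r' by blast
    have e2: "sdisk c2 r2 = {x \<in> S2. c2 \<bullet> x > cos r2}" using sdisk_eq c r r' by blast
    have int: "sdisk c1 r1 \<inter> sdisk c2 r2 = {y \<in> S2. c1 \<bullet> y > cos r1 \<and> c2 \<bullet> y > cos r2}"
      using e1 e2 by auto
    have cpos: "cos r1 > 0" "cos r2 > 0" using r by (auto intro!: cos_gt_zero)
    have xnot: "x \<notin> sdisk c1 r1" using x e1 by auto
    have "x \<in> closure (sdisk c1 r1 \<inter> sdisk c2 r2)"
      unfolding int
    proof (rule approach)
      show "x \<in> S2" "c1 \<bullet> x \<ge> cos r1" "c2 \<bullet> x \<ge> cos r2" using x by (auto simp: S2_iff)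
      show "q \<in> S2" "c1 \<bullet> q > cos r1" "c2 \<bullet> q > cos r2" using q int by auto
    qed (use cpos in auto)
    moreover have "closure (sdisk c1 r1 \<inter> sdisk c2 r2) \<subseteq> closure (sdisk c1 r1)" by (intro closure_mono) auto
    ultimately show "x \<in> bigon_side (sdisk c1 r1) (sdisk c2 r2)"
      unfolding bigon_side_def using xnot by blast
  qed
qed


lemma tangent_exists:
  fixes a b p t :: "real^3"
  assumes u: "a \<bullet> a = 1" "b \<bullet> b = 1" "p \<bullet> p = 1" "t \<bullet> t = 1"
    and ap: "a \<bullet> p = \<alpha>" and bp: "b \<bullet> p = \<beta>"
    and s: "s > 0" "s^2 = 1 - \<alpha>^2"
    and o: "t \<bullet> a = 0" "t \<bullet> p = 0" and bt: "b \<bullet> t > 0"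
  shows "one_sided_tangent {x. x \<bullet> x = 1 \<and> a \<bullet> x = \<alpha> \<and> b \<bullet> x \<ge> \<beta>} p t"
proof -
  define S where "S = {x. x \<bullet> x = 1 \<and> a \<bullet> x = \<alpha> \<and> b \<bullet> x \<ge> \<beta>}"
  have s1: "s^2 \<le> 1" using s by simp
  have "p islimpt S"
    unfolding islimpt_approachable
  proof (intro allI impI)
    fix e :: real assume e: "e > 0"
    define m where "m = \<bar>\<beta> - \<alpha> * (a \<bullet> b)\<bar>"
    define \<tau> where "\<tau> = min (s * (b \<bullet> t) / (m + 1)) (e / 4)"
    have m0: "m \<ge> 0" by (simp add: m_def)
    have tau1: "\<tau> > 0" using s bt e m0 by (simp add: \<tau>_def)
    have tau2: "\<tau> \<le> e / 4" "\<tau> \<le> s * (b \<bullet> t) / (m + 1)" unfolding \<tau>_def by (rule min.cobounded2, rule min.cobounded1)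
    have tau: "\<tau> > 0" "\<tau> \<le> e / 4" "\<tau> * (m + 1) \<le> s * (b \<bullet> t)"
      using tau1 tau2 m0 by (simp_all add: le_divide_eq)
    define g where "g = p - \<alpha> *\<^sub>R a"
    have ga: "g \<bullet> a = 0" and gt: "g \<bullet> t = 0" and gp: "g \<bullet> p = s^2" and gg: "g \<bullet> g = s^2"
      and bg: "b \<bullet> g = \<beta> - \<alpha> * (a \<bullet> b)"
      using u ap bp o s unfolding g_def
      by (auto simp: inner_diff_left inner_diff_right inner_commute power2_eq_square)
    define h where "h = (- \<tau>) *\<^sub>R g + s *\<^sub>R t"
    have hh: "h \<bullet> h = s^2 * (1 + \<tau>^2)" unfolding h_def
      using gg gt u
      by (simp add: inner_add_left inner_add_right inner_commute algebra_simps power2_eq_square)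
    have ha: "a \<bullet> h = 0" unfolding h_def using ga o by (simp add: inner_add_right inner_diff_right inner_commute)
    have hp: "p \<bullet> h = - \<tau> * s^2" unfolding h_def using gp o by (simp add: inner_add_right inner_diff_right inner_commute)
    have bh: "b \<bullet> h = - \<tau> * (b \<bullet> g) + s * (b \<bullet> t)" unfolding h_def by (simp add: inner_add_right inner_diff_right)
    have "\<tau> * (b \<bullet> g) \<le> \<tau> * m" using tau(1) unfolding bg m_def by (intro mult_left_mono) auto
    moreover have "\<tau> * m + \<tau> \<le> s * (b \<bullet> t)" using tau(3) by (simp add: algebra_simps)
    moreover have "b \<bullet> h = s * (b \<bullet> t) - \<tau> * (b \<bullet> g)" using bh by simp
    ultimately have bh0: "b \<bullet> h \<ge> 0" using tau(1) by linarith
    define N where "N = 1 + \<tau>^2"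
    have N: "N \<ge> 1" unfolding N_def by simp
    define v where "v = (2 * \<tau> / N) *\<^sub>R h"
    define q where "q = p + v"
    have hhN: "h \<bullet> h = s^2 * N" using hh by (simp add: N_def)
    have "v \<bullet> v = (2 * \<tau> / N)^2 * (h \<bullet> h)" by (simp add: v_def power2_eq_square)
    also have "\<dots> = 4 * \<tau>^2 * s^2 / N" unfolding hhN using N by (simp add: power2_eq_square field_simps)
    finally have vv: "v \<bullet> v = 4 * \<tau>^2 * s^2 / N" .
    have "q \<bullet> q = p \<bullet> p + 2 * (p \<bullet> v) + v \<bullet> v" unfolding q_def
      by (simp add: inner_add_left inner_add_right inner_commute)
    also have "\<dots> = 1"
    proof -
      have pv: "p \<bullet> v = - 2 * \<tau>^2 * s^2 / N" unfolding v_def using hp by (simp add: power2_eq_square)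
      show ?thesis unfolding pv vv using u N by (simp add: field_simps)
    qed
    finally have qq: "q \<bullet> q = 1" .
    have aq: "a \<bullet> q = \<alpha>" unfolding q_def v_def using ap ha by (simp add: inner_add_right inner_commute)
    have bq: "b \<bullet> q \<ge> \<beta>" unfolding q_def v_def using bp bh0 tau(1) N
      by (simp add: inner_add_right)
    have vpos: "v \<bullet> v > 0" unfolding vv using tau(1) s(1) N by (intro divide_pos_pos mult_pos_pos) auto
    hence qp: "q \<noteq> p" unfolding q_def by auto
    have "(norm v)^2 \<le> (2 * \<tau>)^2"
    proof -
      have "(norm v)^2 = 4 * \<tau>^2 * s^2 / N" using vv by (simp add: power2_norm_eq_inner)
      also have "\<dots> \<le> 4 * \<tau>^2 * s^2" using divide_left_mono[OF N, of "4 * \<tau>^2 * s^2"] N by simp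
      also have "\<dots> \<le> 4 * \<tau>^2" using mult_left_le[OF s1, of "4 * \<tau>^2"] by simp
      finally show ?thesis by (simp add: power_mult_distrib)
    qed
    hence "norm v \<le> 2 * \<tau>" by (rule power2_le_imp_le) (use tau(1) in simp)
    moreover have "dist q p = norm v" unfolding q_def dist_norm by simp
    ultimately have "dist q p < e" using tau(2) e by linarith
    thus "\<exists>x'\<in>S. x' \<noteq> p \<and> dist x' p < e" using qq aq bq qp unfolding S_def by blast
  qed
  moreover have "((\<lambda>q. (q - p) /\<^sub>R norm (q - p)) \<longlongrightarrow> t) (at p within S)"
    unfolding Lim_within
  proof (intro allI impI)
    fix e :: real assume e: "e > 0"
    define d where "d = min (s * (b \<bullet> t)) (s * e)"
    have d: "d > 0" using s bt e by (simp add: d_def)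
    have "\<forall>q\<in>S. 0 < dist q p \<and> dist q p < d \<longrightarrow> dist ((q - p) /\<^sub>R norm (q - p)) t < e"
    proof (intro ballI impI)
      fix q assume qS: "q \<in> S" and qd: "0 < dist q p \<and> dist q p < d"
      define \<delta> where "\<delta> = norm (q - p)"
      have dl: "\<delta> > 0" "\<delta> < s * (b \<bullet> t)" "\<delta> < s * e" using qd unfolding \<delta>_def d_def dist_norm by auto
      define w where "w = (q - p) /\<^sub>R \<delta>"
      have q: "q \<bullet> q = 1" "a \<bullet> q = \<alpha>" "b \<bullet> q \<ge> \<beta>" using qS unfolding S_def by auto
      have ww: "w \<bullet> w = 1" using dl unfolding w_def \<delta>_def by (simp add: power2_norm_eq_inner[symmetric])
      have wa: "w \<bullet> a = 0" unfolding w_def using q ap by (simp add: inner_diff_left inner_diff_right inner_commute)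
      have bw: "b \<bullet> w \<ge> 0" unfolding w_def using q bp dl by (simp add: inner_diff_right)
      have "\<delta>^2 = 2 - 2 * (p \<bullet> q)"
        using q(1) u(3) unfolding \<delta>_def by (simp add: power2_norm_eq_inner inner_diff_left inner_diff_right inner_commute)
      hence pqp: "p \<bullet> (q - p) = - (\<delta>^2) / 2" using u(3) by (simp add: inner_diff_right)
      have "w \<bullet> p = (p \<bullet> (q - p)) / \<delta>" unfolding w_def by (simp add: inner_commute divide_inverse_commute)
      also have "\<dots> = - \<delta> / 2" unfolding pqp using dl by (simp add: power2_eq_square)
      finally have wp: "w \<bullet> p = - \<delta> / 2" .
      define x where "x = p \<times> a"
      have xx: "x \<bullet> x = s^2" unfolding x_def using u ap s
        by (simp add: cross_dot_cross inner_commute power2_eq_square)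
      have wx: "(w \<bullet> x)^2 = s^2 - (\<delta>/2)^2" unfolding x_def
        using triple_gram[of w p a] ww u ap wa wp s
        by (simp add: inner_commute power2_eq_square algebra_simps)
      have e1: "s^2 *\<^sub>R t = (x \<bullet> t) *\<^sub>R x" using par_cross[OF o] xx unfolding x_def by simp
      have xt: "(x \<bullet> t)^2 = s^2"
      proof -
        have "t \<bullet> (s^2 *\<^sub>R t) = t \<bullet> ((x \<bullet> t) *\<^sub>R x)" using e1 by simp
        thus ?thesis using u(4) by (simp add: inner_commute power2_eq_square)
      qed
      define c where "c = w \<bullet> t"
      have "w \<bullet> (s^2 *\<^sub>R t) = w \<bullet> ((x \<bullet> t) *\<^sub>R x)" using e1 by simp
      hence "s^2 * c = (x \<bullet> t) * (w \<bullet> x)" unfolding c_def by simp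
      hence "(s^2 * c)^2 = (x \<bullet> t)^2 * (w \<bullet> x)^2" by (simp add: power_mult_distrib)
      hence "s^2 * (s^2 * c^2) = s^2 * (s^2 - (\<delta>/2)^2)" unfolding xt wx by (simp add: power_mult_distrib mult.assoc)
      hence "s^2 * c^2 = s^2 - (\<delta>/2)^2" using s(1) by (metis mult_left_cancel power_not_zero less_irrefl)
      hence cc: "2 - 2 * c^2 = \<delta>^2 / (2 * s^2)" using s(1) by (simp add: field_simps power2_eq_square)
      have cb: "\<bar>c\<bar> \<le> 1" unfolding c_def using Cauchy_Schwarz_ineq2[of w t] ww u(4)
        by (simp add: norm_eq_1[symmetric])
      have nm: "(norm (w - t))^2 = 2 - 2 * c" unfolding c_def using ww u(4)
        by (simp add: power2_norm_eq_inner inner_diff_left inner_diff_right inner_commute)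
      have np: "(norm (w + t))^2 = 2 + 2 * c" unfolding c_def using ww u(4)
        by (simp add: power2_norm_eq_inner inner_add_left inner_add_right inner_commute)
      have d2: "\<delta>^2 / (2 * s^2) < (b \<bullet> t)^2"
      proof -
        have "\<delta>^2 < (s * (b \<bullet> t))^2" using dl by (intro power_strict_mono) auto
        hence "\<delta>^2 / (2 * s^2) < (s * (b \<bullet> t))^2 / (2 * s^2)" using s(1) by (intro divide_strict_right_mono) auto
        also have "\<dots> = (b \<bullet> t)^2 / 2" using s(1) by (simp add: power_mult_distrib field_simps)
        also have "\<dots> \<le> (b \<bullet> t)^2" by simp
        finally show ?thesis .
      qed
      have c0: "c \<ge> 0"
      proof (rule ccontr)
        assume "\<not> c \<ge> 0"
        hence "c < 0" by simp
        moreover have "1 + c \<ge> 0" using cb by linarith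
        ultimately have "c * (1 + c) \<le> 0" by (intro mult_nonpos_nonneg) auto
        hence "c + c^2 \<le> 0" by (simp add: algebra_simps power2_eq_square)
        hence "(norm (w + t))^2 \<le> \<delta>^2 / (2 * s^2)" using np cc by simp
        moreover have "b \<bullet> t \<le> norm (w + t)"
        proof -
          have "b \<bullet> (w + t) \<le> norm b * norm (w + t)" by (rule norm_cauchy_schwarz)
          moreover have "norm b = 1" using u(2) by (simp add: norm_eq_1)
          ultimately show ?thesis using bw by (simp add: inner_add_right)
        qed
        hence "(b \<bullet> t)^2 \<le> (norm (w + t))^2" using bt by (intro power_mono) auto
        ultimately show False using d2 by simp
      qed
      have "c^2 \<le> c" using mult_left_le[of c c] c0 cb by (simp add: power2_eq_square)
      hence "(norm (w - t))^2 \<le> \<delta>^2 / (2 * s^2)" using nm cc by simp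
      also have "\<dots> < e^2"
      proof -
        have "\<delta>^2 < (s * e)^2" using dl by (intro power_strict_mono) auto
        hence "\<delta>^2 / (2 * s^2) < (s * e)^2 / (2 * s^2)" using s(1) by (intro divide_strict_right_mono) auto
        also have "\<dots> = e^2 / 2" using s(1) by (simp add: power_mult_distrib field_simps)
        also have "\<dots> \<le> e^2" by simp
        finally show ?thesis .
      qed
      finally have "norm (w - t) < e" using e by (simp add: power_less_imp_less_base)
      thus "dist ((q - p) /\<^sub>R norm (q - p)) t < e" unfolding w_def \<delta>_def dist_norm .
    qed
    thus "\<exists>d>0. \<forall>q\<in>S. 0 < dist q p \<and> dist q p < d \<longrightarrow> dist ((q - p) /\<^sub>R norm (q - p)) t < e"
      using d by blast
  qed
  ultimately show ?thesis unfolding one_sided_tangent_def S_def by blast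
qed


lemma corner_angle:
  assumes c: "c1 \<in> S2" "c2 \<in> S2" and r: "0 < r1" "r1 < pi/2" "0 < r2" "r2 < pi/2"
    and th: "0 < \<theta>" "\<theta> < pi"
    and k: "c1 \<bullet> c2 = cos r1 * cos r2 - sin r1 * sin r2 * cos \<theta>"
    and q: "q \<in> sdisk c1 r1 \<inter> sdisk c2 r2"
    and p: "p \<bullet> p = 1" "c1 \<bullet> p = cos r1" "c2 \<bullet> p = cos r2"
  shows "\<exists>t1 t2. one_sided_tangent (bigon_side (sdisk c1 r1) (sdisk c2 r2)) p t1 \<and>
                one_sided_tangent (bigon_side (sdisk c2 r2) (sdisk c1 r1)) p t2 \<and>
                \<theta> = arccos (t1 \<bullet> t2)"
proof -
  define a1 where "a1 = cos r1"
  define a2 where "a2 = cos r2"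
  define s1 where "s1 = sin r1"
  define s2 where "s2 = sin r2"
  have s: "s1 > 0" "s2 > 0" "s1^2 = 1 - a1^2" "s2^2 = 1 - a2^2"
    using r by (auto intro!: sin_gt_zero simp: sin_squared_eq s1_def s2_def a1_def a2_def)
  have sth: "sin \<theta> > 0" using th by (intro sin_gt_zero) auto
  have cu: "c1 \<bullet> c1 = 1" "c2 \<bullet> c2 = 1" using c by (auto simp: S2_iff)
  define K where "K = c1 \<bullet> c2"
  have Kdef: "K = a1 * a2 - s1 * s2 * cos \<theta>" using k by (simp add: K_def a1_def a2_def s1_def s2_def)
  define D where "D = c1 \<bullet> (p \<times> c2)"
  have "D^2 = 1 - a1^2 - a2^2 + 2 * K * a1 * a2 - K^2"
    unfolding D_def using triple_gram[of c1 p c2] cu p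
    by (simp add: K_def a1_def a2_def inner_commute power2_eq_square algebra_simps)
  also have "\<dots> = (1 - a1^2) * (1 - a2^2) - (K - a1 * a2)^2" by (simp add: power2_eq_square algebra_simps)
  also have "\<dots> = s1^2 * s2^2 * (1 - (cos \<theta>)^2)" unfolding Kdef s(3,4)[symmetric]
    by (simp add: power2_eq_square algebra_simps)
  also have "\<dots> = (s1 * s2 * sin \<theta>)^2" by (simp add: sin_squared_eq power_mult_distrib)
  finally have D2: "D^2 = (s1 * s2 * sin \<theta>)^2" .
  have Dnz: "D \<noteq> 0" using D2 s sth by auto
  define \<sigma> :: real where "\<sigma> = (if D > 0 then 1 else -1)"
  have sD: "\<sigma> * D > 0" and ss: "\<sigma> * \<sigma> = 1" using Dnz by (auto simp: \<sigma>_def)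
  define x1 where "x1 = p \<times> c1"
  define x2 where "x2 = p \<times> c2"
  have n1: "x1 \<bullet> x1 = s1^2" unfolding x1_def using cu p s
    by (simp add: cross_dot_cross inner_commute power2_eq_square a1_def)
  have n2: "x2 \<bullet> x2 = s2^2" unfolding x2_def using cu p s
    by (simp add: cross_dot_cross inner_commute power2_eq_square a2_def)
  have x12: "x1 \<bullet> x2 = K - a1 * a2" unfolding x1_def x2_def K_def using cu p
    by (simp add: cross_dot_cross inner_commute a1_def a2_def)
  define t1 where "t1 = (- \<sigma> / s1) *\<^sub>R x1"
  define t2 where "t2 = (\<sigma> / s2) *\<^sub>R x2"
  have t1u: "t1 \<bullet> t1 = 1" unfolding t1_def using n1 s(1) ss by (simp add: power2_eq_square)
  have t2u: "t2 \<bullet> t2 = 1" unfolding t2_def using n2 s(2) ss by (simp add: power2_eq_square)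
  have t1o: "t1 \<bullet> c1 = 0" "t1 \<bullet> p = 0" unfolding t1_def x1_def by (simp_all add: dot_cross_self)
  have t2o: "t2 \<bullet> c2 = 0" "t2 \<bullet> p = 0" unfolding t2_def x2_def by (simp_all add: dot_cross_self)
  have "c2 \<bullet> t1 = (\<sigma> * D) / s1" unfolding t1_def x1_def D_def using triple_swap[of c2 p c1] by simp
  hence t1b: "c2 \<bullet> t1 > 0" using sD s by simp
  have "c1 \<bullet> t2 = (\<sigma> * D) / s2" unfolding t2_def x2_def D_def by simp
  hence t2b: "c1 \<bullet> t2 > 0" using sD s by simp
  have "t1 \<bullet> t2 = - (\<sigma> * \<sigma>) * (x1 \<bullet> x2) / (s1 * s2)" unfolding t1_def t2_def by (simp add: mult.commute mult.left_commute)
  also have "\<dots> = cos \<theta>" unfolding ss x12 Kdef using s by (simp add: field_simps)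
  finally have tt: "t1 \<bullet> t2 = cos \<theta>" .
  have q': "q \<in> sdisk c2 r2 \<inter> sdisk c1 r1" using q by auto
  have S1: "bigon_side (sdisk c1 r1) (sdisk c2 r2) = {x. x \<bullet> x = 1 \<and> c1 \<bullet> x = a1 \<and> c2 \<bullet> x \<ge> a2}"
    unfolding a1_def a2_def by (rule side_eq[OF c r q])
  have S2': "bigon_side (sdisk c2 r2) (sdisk c1 r1) = {x. x \<bullet> x = 1 \<and> c2 \<bullet> x = a2 \<and> c1 \<bullet> x \<ge> a1}"
    unfolding a1_def a2_def by (rule side_eq[OF c(2,1) r(3,4,1,2) q'])
  have T1: "one_sided_tangent (bigon_side (sdisk c1 r1) (sdisk c2 r2)) p t1"
    unfolding S1 by (rule tangent_exists[OF cu(1,2) p(1) t1u _ _ s(1,3) t1o t1b]) (use p in \<open>simp_all add: a1_def a2_def\<close>)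
  have T2: "one_sided_tangent (bigon_side (sdisk c2 r2) (sdisk c1 r1)) p t2"
    unfolding S2' by (rule tangent_exists[OF cu(2,1) p(1) t2u _ _ s(2,4) t2o t2b]) (use p in \<open>simp_all add: a1_def a2_def\<close>)
  have "\<theta> = arccos (t1 \<bullet> t2)" unfolding tt using th by (simp add: arccos_cos)
  with T1 T2 show ?thesis by blast
qed


lemma inner_vec3: "(vector [a1, a2, a3] :: real^3) \<bullet> vector [b1, b2, b3] = a1 * b1 + a2 * b2 + a3 * b3"
  by (simp add: inner_vec_def sum_3)

lemma stereo:
  fixes p w :: "real^3"
  assumes "p \<bullet> p = 1" "w \<bullet> p = 0" "\<epsilon> > 0"
  shows "\<exists>x. x \<bullet> x = 1 \<and> (\<forall>c. c \<bullet> x - c \<bullet> p = (2 * \<epsilon> / (1 + \<epsilon>^2 * (w \<bullet> w))) * (c \<bullet> w - (c \<bullet> p) * \<epsilon> * (w \<bullet> w)))"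
proof -
  define E where "E = \<epsilon>^2 * (w \<bullet> w)"
  have E: "E \<ge> 0" unfolding E_def by simp
  have E1: "1 + E \<noteq> 0" "(1 + E)^2 \<noteq> 0" using E by auto
  define x where "x = ((1 - E) / (1 + E)) *\<^sub>R p + (2 * \<epsilon> / (1 + E)) *\<^sub>R w"
  have "x \<bullet> x = ((1 - E)^2 + 4 * \<epsilon>^2 * (w \<bullet> w)) / (1 + E)^2"
    unfolding x_def using assms E E1
    by (simp add: inner_add_left inner_add_right inner_commute power2_eq_square add_divide_distrib[symmetric])
  also have "\<dots> = 1"
  proof -
    have "(1 - E)^2 + 4 * \<epsilon>^2 * (w \<bullet> w) = (1 + E)^2" unfolding E_def by (simp add: power2_eq_square algebra_simps)
    thus ?thesis using E1 by simp
  qed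
  finally have xx: "x \<bullet> x = 1" .
  have "c \<bullet> x - c \<bullet> p = (2 * \<epsilon> / (1 + E)) * (c \<bullet> w - (c \<bullet> p) * \<epsilon> * (w \<bullet> w))" for c
  proof -
    have "c \<bullet> x = ((1 - E) * (c \<bullet> p) + 2 * \<epsilon> * (c \<bullet> w)) / (1 + E)"
      unfolding x_def by (simp add: inner_add_right add_divide_distrib)
    hence "c \<bullet> x - c \<bullet> p = (2 * \<epsilon> * (c \<bullet> w) - 2 * E * (c \<bullet> p)) / (1 + E)"
      using E1 by (simp add: field_simps)
    also have "2 * \<epsilon> * (c \<bullet> w) - 2 * E * (c \<bullet> p) = 2 * \<epsilon> * (c \<bullet> w - (c \<bullet> p) * \<epsilon> * (w \<bullet> w))"
      unfolding E_def by (simp add: power2_eq_square algebra_simps)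
    finally show ?thesis by simp
  qed
  thus ?thesis using xx unfolding E_def by blast
qed

lemma stereo_sign:
  fixes p w :: "real^3"
  assumes "p \<bullet> p = 1" "w \<bullet> p = 0" "\<epsilon> > 0"
  shows "\<exists>x. x \<in> S2 \<and> (\<forall>c. (c \<bullet> x > c \<bullet> p \<longleftrightarrow> c \<bullet> w > (c \<bullet> p) * \<epsilon> * (w \<bullet> w)))"
proof -
  define P where "P = 2 * \<epsilon> / (1 + \<epsilon>^2 * (w \<bullet> w))"
  obtain x where x: "x \<bullet> x = 1" "\<And>c. c \<bullet> x - c \<bullet> p = P * (c \<bullet> w - (c \<bullet> p) * \<epsilon> * (w \<bullet> w))"
    using stereo[OF assms] unfolding P_def by blast
  have pos: "P > 0" using assms(3) unfolding P_def
    by (intro divide_pos_pos) (auto intro: add_pos_nonneg)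
  have "c \<bullet> x > c \<bullet> p \<longleftrightarrow> c \<bullet> w > (c \<bullet> p) * \<epsilon> * (w \<bullet> w)" for c
  proof -
    have "c \<bullet> x > c \<bullet> p \<longleftrightarrow> c \<bullet> x - c \<bullet> p > 0" by simp
    also have "\<dots> \<longleftrightarrow> c \<bullet> w - (c \<bullet> p) * \<epsilon> * (w \<bullet> w) > 0" unfolding x(2) using pos
      by (simp add: zero_less_mult_iff)
    finally show ?thesis by simp
  qed
  thus ?thesis using x(1) by (auto simp: S2_iff)
qed


lemma small_bound:
  fixes \<alpha> \<epsilon> W X :: real
  assumes "0 < \<alpha>" "\<alpha> < 1" "0 \<le> W" "W \<le> 4" "0 < \<epsilon>" "8 * \<epsilon> \<le> X"
  shows "\<alpha> * \<epsilon> * W < X"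
proof -
  have h1: "\<alpha> * (\<epsilon> * W) \<le> \<epsilon> * W" using assms by (intro mult_left_le_one_le) auto
  have h2: "\<epsilon> * W \<le> \<epsilon> * 4" using assms by (intro mult_left_mono) auto
  have h3: "\<alpha> * \<epsilon> * W = \<alpha> * (\<epsilon> * W)" by (simp add: mult.assoc)
  show ?thesis using h1 h2 h3 assms by linarith
qed

lemma existence:
  fixes \<theta> r1 r2 :: real
  assumes th: "0 < \<theta>" "\<theta> < pi"
    and r: "0 < r1" "r1 < pi/2" "0 < r2" "r2 < pi/2"
  shows "\<exists>D1 D2. is_bigon D1 D2 \<and> bigon_angle D1 D2 \<theta> \<and> is_sdisk D1 r1 \<and> is_sdisk D2 r2"
proof -
  define a1 where "a1 = cos r1"
  define a2 where "a2 = cos r2"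
  define s1 where "s1 = sin r1"
  define s2 where "s2 = sin r2"
  define ct where "ct = cos \<theta>"
  define st where "st = sin \<theta>"
  have s: "s1 > 0" "s2 > 0" "st > 0"
    using r th by (auto intro!: sin_gt_zero simp: s1_def s2_def st_def)
  have a: "a1 > 0" "a2 > 0" using r by (auto intro!: cos_gt_zero simp: a1_def a2_def)
  have id: "s1^2 + a1^2 = 1" "s2^2 + a2^2 = 1" "st^2 + ct^2 = 1"
    by (simp_all add: s1_def a1_def s2_def a2_def st_def ct_def)
  have sp: "s1^2 > 0" "s2^2 > 0" using s by simp_all
  have "a1^2 < 1^2" "a2^2 < 1^2" using sp id(1,2) unfolding power_one by linarith+
  hence a1l: "a1 < 1" and a2l: "a2 < 1" by (auto intro: power_less_imp_less_base)
  have ctb: "ct \<le> 1" "ct \<ge> -1" by (simp_all add: ct_def)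
  define c1 :: "real^3" where "c1 = vector [s1, 0, a1]"
  define c2 :: "real^3" where "c2 = vector [- s2 * ct, s2 * st, a2]"
  define p0 :: "real^3" where "p0 = vector [0, 0, 1]"
  have c1S: "c1 \<in> S2" unfolding S2_iff c1_def inner_vec3 using id(1) by (simp add: power2_eq_square)
  have "c2 \<bullet> c2 = s2^2 * (st^2 + ct^2) + a2^2" unfolding c2_def inner_vec3 by (simp add: power2_eq_square algebra_simps)
  hence c2S: "c2 \<in> S2" unfolding S2_iff using id(2,3) by simp
  have k: "c1 \<bullet> c2 = cos r1 * cos r2 - sin r1 * sin r2 * cos \<theta>"
    unfolding c1_def c2_def inner_vec3 by (simp add: a1_def a2_def s1_def s2_def ct_def)
  have pp: "p0 \<bullet> p0 = 1" "c1 \<bullet> p0 = cos r1" "c2 \<bullet> p0 = cos r2"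
    unfolding p0_def c1_def c2_def inner_vec3 by (simp_all add: a1_def a2_def)
  have r': "r1 < pi" "r2 < pi" using r by auto
  have d1: "sdisk c1 r1 = {x \<in> S2. c1 \<bullet> x > a1}" unfolding a1_def by (rule sdisk_eq[OF c1S r(1) r'(1)])
  have d2: "sdisk c2 r2 = {x \<in> S2. c2 \<bullet> x > a2}" unfolding a2_def by (rule sdisk_eq[OF c2S r(3) r'(2)])
  define \<epsilon> where "\<epsilon> = min s1 s2 * st / 8"
  have eps: "\<epsilon> > 0" "8 * \<epsilon> \<le> s1 * st" "8 * \<epsilon> \<le> s2 * st"
    using s by (auto simp: \<epsilon>_def min_def intro: mult_right_mono)
  have pc: "c1 \<bullet> p0 = a1" "c2 \<bullet> p0 = a2" using pp by (simp_all add: a1_def a2_def)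
  define wI :: "real^3" where "wI = vector [st, 1 + ct, 0]"
  have wI: "wI \<bullet> p0 = 0" "c1 \<bullet> wI = s1 * st" "c2 \<bullet> wI = s2 * st" "wI \<bullet> wI = 2 + 2 * ct"
    unfolding wI_def p0_def c1_def c2_def inner_vec3 using id(3)
    by (simp_all add: algebra_simps power2_eq_square)
  obtain xI where xI: "xI \<in> S2" "\<And>c. c \<bullet> xI > c \<bullet> p0 \<longleftrightarrow> c \<bullet> wI > (c \<bullet> p0) * \<epsilon> * (wI \<bullet> wI)"
    using stereo_sign[OF pp(1) wI(1) eps(1)] by blast
  have xI1: "c1 \<bullet> xI > a1" using xI(2)[of c1] small_bound[OF a(1) a1l _ _ eps(1) eps(2)] wI ctb pc by simp
  have xI2: "c2 \<bullet> xI > a2" using xI(2)[of c2] small_bound[OF a(2) a2l _ _ eps(1) eps(3)] wI ctb pc by simp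
  have qI: "xI \<in> sdisk c1 r1 \<inter> sdisk c2 r2" using xI1 xI2 xI(1) d1 d2 by auto
  define wA :: "real^3" where "wA = vector [st, ct - 1, 0]"
  have wA: "wA \<bullet> p0 = 0" "c1 \<bullet> wA = s1 * st" "c2 \<bullet> wA = - s2 * st" "wA \<bullet> wA = 2 - 2 * ct"
    unfolding wA_def p0_def c1_def c2_def inner_vec3 using id(3)
    by (simp_all add: algebra_simps power2_eq_square)
  obtain xA where xA: "xA \<in> S2" "\<And>c. c \<bullet> xA > c \<bullet> p0 \<longleftrightarrow> c \<bullet> wA > (c \<bullet> p0) * \<epsilon> * (wA \<bullet> wA)"
    using stereo_sign[OF pp(1) wA(1) eps(1)] by blast
  have xA1: "c1 \<bullet> xA > a1" using xA(2)[of c1] small_bound[OF a(1) a1l _ _ eps(1) eps(2)] wA ctb pc by simp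
  have "a2 * \<epsilon> * (wA \<bullet> wA) \<ge> 0" using a eps wA ctb by simp
  moreover have "s2 * st > 0" using s by simp
  ultimately have "\<not> c2 \<bullet> wA > (c2 \<bullet> p0) * \<epsilon> * (wA \<bullet> wA)" unfolding wA(3) pc(2) by simp
  hence xA2: "\<not> c2 \<bullet> xA > a2" using xA(2)[of c2] pc(2) by simp
  define wB :: "real^3" where "wB = vector [- st, 1 - ct, 0]"
  have wB: "wB \<bullet> p0 = 0" "c1 \<bullet> wB = - s1 * st" "c2 \<bullet> wB = s2 * st" "wB \<bullet> wB = 2 - 2 * ct"
    unfolding wB_def p0_def c1_def c2_def inner_vec3 using id(3)
    by (simp_all add: algebra_simps power2_eq_square)
  obtain xB where xB: "xB \<in> S2" "\<And>c. c \<bullet> xB > c \<bullet> p0 \<longleftrightarrow> c \<bullet> wB > (c \<bullet> p0) * \<epsilon> * (wB \<bullet> wB)"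
    using stereo_sign[OF pp(1) wB(1) eps(1)] by blast
  have xB2: "c2 \<bullet> xB > a2" using xB(2)[of c2] small_bound[OF a(2) a2l _ _ eps(1) eps(3)] wB ctb pc by simp
  have "a1 * \<epsilon> * (wB \<bullet> wB) \<ge> 0" using a eps wB ctb by simp
  moreover have "s1 * st > 0" using s by simp
  ultimately have "\<not> c1 \<bullet> wB > (c1 \<bullet> p0) * \<epsilon> * (wB \<bullet> wB)" unfolding wB(2) pc(1) by simp
  hence xB1: "\<not> c1 \<bullet> xB > a1" using xB(2)[of c1] pc(1) by simp
  define D1 where "D1 = sdisk c1 r1"
  define D2 where "D2 = sdisk c2 r2"
  have isd: "is_sdisk D1 r1" "is_sdisk D2 r2" unfolding is_sdisk_def D1_def D2_def using c1S c2S by auto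
  have big: "is_bigon D1 D2"
    unfolding is_bigon_def
  proof (intro conjI)
    show "\<exists>r1'. 0 < r1' \<and> r1' < pi/2 \<and> is_sdisk D1 r1'" using r isd by blast
    show "\<exists>r2'. 0 < r2' \<and> r2' < pi/2 \<and> is_sdisk D2 r2'" using r isd by blast
    show "\<not> D1 \<subseteq> D2" using xA(1) xA1 xA2 unfolding D1_def D2_def d1 d2 by auto
    show "\<not> D2 \<subseteq> D1" using xB(1) xB1 xB2 unfolding D1_def D2_def d1 d2 by auto
    show "D1 \<inter> D2 \<noteq> {}" using qI unfolding D1_def D2_def by auto
  qed
  have q': "xI \<in> sdisk c2 r2 \<inter> sdisk c1 r1" using qI by auto
  have S1: "bigon_side D1 D2 = {x. x \<bullet> x = 1 \<and> c1 \<bullet> x = cos r1 \<and> c2 \<bullet> x \<ge> cos r2}"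
    unfolding D1_def D2_def by (rule side_eq[OF c1S c2S r qI])
  have S2': "bigon_side D2 D1 = {x. x \<bullet> x = 1 \<and> c2 \<bullet> x = cos r2 \<and> c1 \<bullet> x \<ge> cos r1}"
    unfolding D1_def D2_def by (rule side_eq[OF c2S c1S r(3,4,1,2) q'])
  have "p0 \<in> bigon_corners D1 D2" unfolding bigon_corners_def S1 S2' using pp by simp
  hence cne: "bigon_corners D1 D2 \<noteq> {}" by auto
  have "\<forall>p\<in>bigon_corners D1 D2. \<exists>t1 t2.
        one_sided_tangent (bigon_side D1 D2) p t1 \<and>
        one_sided_tangent (bigon_side D2 D1) p t2 \<and> \<theta> = arccos (t1 \<bullet> t2)"
  proof
    fix p assume "p \<in> bigon_corners D1 D2"
    hence p: "p \<bullet> p = 1" "c1 \<bullet> p = cos r1" "c2 \<bullet> p = cos r2"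
      unfolding bigon_corners_def S1 S2' by auto
    show "\<exists>t1 t2. one_sided_tangent (bigon_side D1 D2) p t1 \<and>
        one_sided_tangent (bigon_side D2 D1) p t2 \<and> \<theta> = arccos (t1 \<bullet> t2)"
      unfolding D1_def D2_def by (rule corner_angle[OF c1S c2S r th k qI p])
  qed
  hence "bigon_angle D1 D2 \<theta>" using cne unfolding bigon_angle_def by blast
  with big isd show ?thesis by blast
qed

theorem lemma3p1:
  fixes \<theta> r1 r2 :: real
  assumes "0 < \<theta>" "\<theta> < pi"
    and "0 < r1" "r1 < pi/2" "0 < r2" "r2 < pi/2"
  shows "(\<exists>D1 D2. is_bigon D1 D2 \<and> bigon_angle D1 D2 \<theta> \<and>
                 is_sdisk D1 r1 \<and> is_sdisk D2 r2) \<and>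
         (\<forall>D1 D2 E1 E2.
            is_bigon D1 D2 \<and> bigon_angle D1 D2 \<theta> \<and> is_sdisk D1 r1 \<and> is_sdisk D2 r2 \<and>
            is_bigon E1 E2 \<and> bigon_angle E1 E2 \<theta> \<and> is_sdisk E1 r1 \<and> is_sdisk E2 r2
            \<longrightarrow> (\<exists>f. sphere_isometry f \<and> f ` D1 = E1 \<and> f ` D2 = E2))"
proof (intro conjI allI impI)
  show "\<exists>D1 D2. is_bigon D1 D2 \<and> bigon_angle D1 D2 \<theta> \<and> is_sdisk D1 r1 \<and> is_sdisk D2 r2"
    by (rule existence) (use assms in auto)
next
  fix D1 D2 E1 E2
  assume H: "is_bigon D1 D2 \<and> bigon_angle D1 D2 \<theta> \<and> is_sdisk D1 r1 \<and> is_sdisk D2 r2 \<and>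
            is_bigon E1 E2 \<and> bigon_angle E1 E2 \<theta> \<and> is_sdisk E1 r1 \<and> is_sdisk E2 r2"
  obtain c1 where c1: "c1 \<in> S2" "D1 = sdisk c1 r1" using H unfolding is_sdisk_def by blast
  obtain c2 where c2: "c2 \<in> S2" "D2 = sdisk c2 r2" using H unfolding is_sdisk_def by blast
  obtain e1 where e1: "e1 \<in> S2" "E1 = sdisk e1 r1" using H unfolding is_sdisk_def by blast
  obtain e2 where e2: "e2 \<in> S2" "E2 = sdisk e2 r2" using H unfolding is_sdisk_def by blast
  have "c1 \<bullet> c2 = cos r1 * cos r2 - sin r1 * sin r2 * cos \<theta>"
    by (rule angle_det[OF c1(1) c2(1) assms(3-6,1,2)]) (use H c1 c2 in simp)
  moreover have "e1 \<bullet> e2 = cos r1 * cos r2 - sin r1 * sin r2 * cos \<theta>"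
    by (rule angle_det[OF e1(1) e2(1) assms(3-6,1,2)]) (use H e1 e2 in simp)
  ultimately obtain f where f: "inner_pres f" "f c1 = e1" "f c2 = e2"
    using iso_exists[OF c1(1) c2(1) e1(1) e2(1)] by auto
  show "\<exists>f. sphere_isometry f \<and> f ` D1 = E1 \<and> f ` D2 = E2"
    using inner_pres_iso[OF f(1)] inner_pres_disk[OF f(1) c1(1)] inner_pres_disk[OF f(1) c2(1)]
      f c1 c2 e1 e2 by (intro exI[of _ f]) auto
qed

end
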